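(* Let $(\mathcal A,n)$ be a dynamic network congestion game. An infinite path $\rho$ from $c_{\mathsf{src}}$ in the configuration graph is the outcome of a Nash equilibrium if, and only if, for every player $i\in[n]$, every index $1\le l<|\rho|$, and every configuration $c\in\mathrm{dev}_i(\rho(l),\rho(l+1))$, \[\mathrm{cost}_i(\rho_{\ge l})\le \mathrm{val}_{i,c}+\mathrm{cost}_i(\rho(l),c).\]
   Context: An arena is $\mathcal A=(V,E,\mathsf{src},\mathsf{tgt})$ with $V$ finite and $E$ a partial function from $V\times V$ to non-decreasing piecewise-affine functions $\mathbb N\to\mathbb N$ (edge $e$ has cost function $\ell_e$); $\mathsf{tgt}$ has only a self-loop of constant cost $0$ and is reachable from every state. In the dynamic NCG $(\mathcal A,n)$ with players $[n]=\{1,\dots,n\}$, configurations are maps $c:[n]\to V$; $c_{\mathsf{src}}$ maps everyone to $\mathsf{src}$. From $c$, a move vector $(e_i)_i$ with $e_i$ an edge leaving $c(i)$ leads to $c'$ with $c'(i)$ the target of $e_i$; player $i$ pays $w(i)=\ell_{e_i}(u_i)$, $u_i$ being the number of $j$ with $e_j=e_i$. This is a transition $c\Rightarrow c'$ with weight vector $w$; write $\mathrm{cost}_i(c,c')=w(i)$. A path is a sequence of consecutive transitions; $\rho(l)$ is its $l$-th configuration, $\rho_{\ge l}$ its suffix from the $l$-th configuration, and $\mathrm{cost}_i$ of a path is player $i$'s total payment along it ($+\infty$ for an infinite path along which player $i$ never reaches $\mathsf{tgt}$). Strategies map finite histories to edges leaving the player's current state; a profile has a unique outcome; $\mathrm{cost}_i(\sigma)$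 is the cost of the outcome; a Nash equilibrium is a profile where no player can lower their cost by a unilateral change of strategy. Define $\mathrm{dev}_i(c,c')=\{c''\mid c\Rightarrow c'' \text{ and } c''(j)=c'(j)\ \forall j\neq i\}$. The value of configuration $c$ for player $i$ is $\mathrm{val}_{i,c}=\sup_{\sigma_{-i}}\inf_{\sigma_i}\mathrm{cost}_i((\sigma_{-i},\sigma_i),c)$, where the game is started from configuration $c$, $\sigma_{-i}$ ranges over strategies of the other players and $\sigma_i$ over strategies of player $i$. *)

theory Defs
  imports Main "HOL-Library.Extended_Nat"
begin

definition piecewise_affine :: "(nat \<Rightarrow> nat) \<Rightarrow> bool" where
  "piecewise_affine f \<longleftrightarrow>
     (\<exists>(p :: nat list) (a :: nat \<Rightarrow> real) (b :: nat \<Rightarrow> real).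
        p \<noteq> [] \<and> hd p = 0 \<and> sorted p \<and>
        (\<forall>j < length p. \<forall>x. p ! j \<le> x \<and> (Suc j < length p \<longrightarrow> x < p ! Suc j)
              \<longrightarrow> real (f x) = a j * real x + b j))"

definition edge_rel :: "('v \<Rightarrow> 'v \<Rightarrow> (nat \<Rightarrow> nat) option) \<Rightarrow> ('v \<times> 'v) set" where
  "edge_rel E = {(a, b). E a b \<noteq> None}"

(* Arena (V, E, src, tgt); E a b = Some l means there is an edge a -> b with cost function l *)
definition arena :: "'v set \<Rightarrow> ('v \<Rightarrow> 'v \<Rightarrow> (nat \<Rightarrow> nat) option) \<Rightarrow> 'v \<Rightarrow> 'v \<Rightarrow> bool" where
  "arena V E src tgt \<longleftrightarrow>
     finite V \<and> src \<in> V \<and> tgt \<in> V \<and>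
     (\<forall>a b. E a b \<noteq> None \<longrightarrow> a \<in> V \<and> b \<in> V) \<and>
     (\<forall>a b l. E a b = Some l \<longrightarrow> mono l \<and> piecewise_affine l) \<and>
     (\<forall>b. E tgt b \<noteq> None \<longleftrightarrow> b = tgt) \<and>
     E tgt tgt = Some (\<lambda>_. 0) \<and>
     (\<forall>v\<in>V. (v, tgt) \<in> (edge_rel E)\<^sup>*)"

definition is_config :: "'v set \<Rightarrow> nat \<Rightarrow> (nat \<Rightarrow> 'v) \<Rightarrow> bool" where
  "is_config V n c \<longleftrightarrow> (\<forall>i\<in>{1..n}. c i \<in> V) \<and> (\<forall>i. i \<notin> {1..n} \<longrightarrow> c i = undefined)"

definition c_src :: "nat \<Rightarrow> 'v \<Rightarrow> (nat \<Rightarrow> 'v)" where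
  "c_src n src = (\<lambda>i. if i \<in> {1..n} then src else undefined)"

definition trans :: "'v set \<Rightarrow> ('v \<Rightarrow> 'v \<Rightarrow> (nat \<Rightarrow> nat) option) \<Rightarrow> nat
                     \<Rightarrow> (nat \<Rightarrow> 'v) \<Rightarrow> (nat \<Rightarrow> 'v) \<Rightarrow> bool" where
  "trans V E n c c' \<longleftrightarrow> is_config V n c \<and> is_config V n c' \<and>
     (\<forall>i\<in>{1..n}. E (c i) (c' i) \<noteq> None)"

definition load :: "nat \<Rightarrow> (nat \<Rightarrow> 'v) \<Rightarrow> (nat \<Rightarrow> 'v) \<Rightarrow> nat \<Rightarrow> nat" where
  "load n c c' i = card {j\<in>{1..n}. c j = c i \<and> c' j = c' i}"

definition step_cost :: "('v \<Rightarrow> 'v \<Rightarrow> (nat \<Rightarrow> nat) option) \<Rightarrow> nat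
                         \<Rightarrow> (nat \<Rightarrow> 'v) \<Rightarrow> (nat \<Rightarrow> 'v) \<Rightarrow> nat \<Rightarrow> nat" where
  "step_cost E n c c' i = the (E (c i) (c' i)) (load n c c' i)"

definition dev :: "'v set \<Rightarrow> ('v \<Rightarrow> 'v \<Rightarrow> (nat \<Rightarrow> nat) option) \<Rightarrow> nat \<Rightarrow> nat
                   \<Rightarrow> (nat \<Rightarrow> 'v) \<Rightarrow> (nat \<Rightarrow> 'v) \<Rightarrow> (nat \<Rightarrow> 'v) set" where
  "dev V E n i c c' = {c''. trans V E n c c'' \<and> (\<forall>j\<in>{1..n}. j \<noteq> i \<longrightarrow> c'' j = c' j)}"

(* cost of player i along an infinite path (indexed from 0): total payment up to the
   first visit of tgt, or infinity if tgt is never reached (afterwards only cost-0 self-loops) *)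
definition path_cost :: "'v \<Rightarrow> ('v \<Rightarrow> 'v \<Rightarrow> (nat \<Rightarrow> nat) option) \<Rightarrow> nat \<Rightarrow> nat
                         \<Rightarrow> (nat \<Rightarrow> nat \<Rightarrow> 'v) \<Rightarrow> enat" where
  "path_cost tgt E n i \<rho> =
     (if \<exists>k. \<rho> k i = tgt
      then enat (\<Sum>k < (LEAST k. \<rho> k i = tgt). step_cost E n (\<rho> k) (\<rho> (Suc k)) i)
      else \<infinity>)"

definition suffix :: "(nat \<Rightarrow> 'c) \<Rightarrow> nat \<Rightarrow> (nat \<Rightarrow> 'c)" where
  "suffix \<rho> l = (\<lambda>k. \<rho> (k + l))"

definition is_inf_path :: "'v set \<Rightarrow> ('v \<Rightarrow> 'v \<Rightarrow> (nat \<Rightarrow> nat) option) \<Rightarrow> nat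
                           \<Rightarrow> (nat \<Rightarrow> nat \<Rightarrow> 'v) \<Rightarrow> bool" where
  "is_inf_path V E n \<rho> \<longleftrightarrow> (\<forall>k. trans V E n (\<rho> k) (\<rho> (Suc k)))"

definition strategy :: "'v set \<Rightarrow> ('v \<Rightarrow> 'v \<Rightarrow> (nat \<Rightarrow> nat) option) \<Rightarrow> nat
                        \<Rightarrow> ((nat \<Rightarrow> 'v) list \<Rightarrow> 'v) \<Rightarrow> bool" where
  "strategy V E i s \<longleftrightarrow> (\<forall>h. h \<noteq> [] \<longrightarrow> last h i \<in> V \<longrightarrow> E (last h i) (s h) \<noteq> None)"

definition valid_profile :: "'v set \<Rightarrow> ('v \<Rightarrow> 'v \<Rightarrow> (nat \<Rightarrow> nat) option) \<Rightarrow> nat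
                             \<Rightarrow> (nat \<Rightarrow> (nat \<Rightarrow> 'v) list \<Rightarrow> 'v) \<Rightarrow> bool" where
  "valid_profile V E n \<sigma> \<longleftrightarrow> (\<forall>i\<in>{1..n}. strategy V E i (\<sigma> i))"

fun hist :: "nat \<Rightarrow> (nat \<Rightarrow> (nat \<Rightarrow> 'v) list \<Rightarrow> 'v) \<Rightarrow> (nat \<Rightarrow> 'v) \<Rightarrow> nat \<Rightarrow> (nat \<Rightarrow> 'v) list" where
  "hist n \<sigma> c0 0 = [c0]"
| "hist n \<sigma> c0 (Suc k) =
     (let h = hist n \<sigma> c0 k in h @ [(\<lambda>i. if i \<in> {1..n} then \<sigma> i h else undefined)])"

definition outcome :: "nat \<Rightarrow> (nat \<Rightarrow> (nat \<Rightarrow> 'v) list \<Rightarrow> 'v) \<Rightarrow> (nat \<Rightarrow> 'v) \<Rightarrow> (nat \<Rightarrow> nat \<Rightarrow> 'v)" where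
  "outcome n \<sigma> c0 = (\<lambda>k. last (hist n \<sigma> c0 k))"

definition is_NE :: "'v set \<Rightarrow> ('v \<Rightarrow> 'v \<Rightarrow> (nat \<Rightarrow> nat) option) \<Rightarrow> 'v \<Rightarrow> 'v \<Rightarrow> nat
                     \<Rightarrow> (nat \<Rightarrow> (nat \<Rightarrow> 'v) list \<Rightarrow> 'v) \<Rightarrow> bool" where
  "is_NE V E src tgt n \<sigma> \<longleftrightarrow> valid_profile V E n \<sigma> \<and>
     (\<forall>i\<in>{1..n}. \<forall>s. strategy V E i s \<longrightarrow>
        path_cost tgt E n i (outcome n \<sigma> (c_src n src))
          \<le> path_cost tgt E n i (outcome n (\<sigma>(i := s)) (c_src n src)))"

definition val :: "'v set \<Rightarrow> ('v \<Rightarrow> 'v \<Rightarrow> (nat \<Rightarrow> nat) option) \<Rightarrow> 'v \<Rightarrow> nat \<Rightarrow> nat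
                   \<Rightarrow> (nat \<Rightarrow> 'v) \<Rightarrow> enat" where
  "val V E tgt n i c =
     (SUP \<sigma>\<in>{\<sigma>. valid_profile V E n \<sigma>}. INF s\<in>{s. strategy V E i s}.
        path_cost tgt E n i (outcome n (\<sigma>(i := s)) c))"

end

theory Submission
  imports Defs
begin

definition dist0 :: "('v \<Rightarrow> 'v \<Rightarrow> (nat \<Rightarrow> nat) option) \<Rightarrow> 'v \<Rightarrow> 'v \<Rightarrow> nat" where
  "dist0 E tgt v = (LEAST k. (v, tgt) \<in> (edge_rel E) ^^ k)"

definition nxt :: "('v \<Rightarrow> 'v \<Rightarrow> (nat \<Rightarrow> nat) option) \<Rightarrow> 'v \<Rightarrow> 'v \<Rightarrow> 'v" where
  "nxt E tgt v = (if v = tgt then tgt else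
     SOME w. E v w \<noteq> None \<and> (w, tgt) \<in> (edge_rel E) ^^ (dist0 E tgt v - 1))"

lemma arena_edge: "arena V E src tgt \<Longrightarrow> E a b \<noteq> None \<Longrightarrow> a \<in> V \<and> b \<in> V"
  unfolding arena_def by blast

lemma nxt_props:
  assumes ar: "arena V E src tgt" and v: "v \<in> V"
  shows "E v (nxt E tgt v) \<noteq> None" "nxt E tgt v \<in> V"
    "v \<noteq> tgt \<Longrightarrow> dist0 E tgt (nxt E tgt v) < dist0 E tgt v"
proof -
  have "(v, tgt) \<in> (edge_rel E)\<^sup>*" using ar v unfolding arena_def by blast
  then obtain k where "(v, tgt) \<in> (edge_rel E) ^^ k" using rtrancl_power by blast
  hence dk: "(v, tgt) \<in> (edge_rel E) ^^ dist0 E tgt v" unfolding dist0_def by (rule LeastI)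
  have "E v (nxt E tgt v) \<noteq> None \<and> nxt E tgt v \<in> V \<and>
    (v \<noteq> tgt \<longrightarrow> dist0 E tgt (nxt E tgt v) < dist0 E tgt v)"
  proof (cases "v = tgt")
    case True
    have "E tgt tgt = Some (\<lambda>_. 0)" "tgt \<in> V" using ar unfolding arena_def by blast+
    then show ?thesis using True unfolding nxt_def by simp
  next
    case False
    have "dist0 E tgt v \<noteq> 0"
    proof
      assume "dist0 E tgt v = 0" with dk False show False by simp
    qed
    then obtain m where m: "dist0 E tgt v = Suc m" using not0_implies_Suc by blast
    then obtain y where "(v, y) \<in> edge_rel E" "(y, tgt) \<in> (edge_rel E) ^^ m"
      using dk m relpow_Suc_D2[of v tgt m "edge_rel E"] by auto
    hence ex: "\<exists>w. E v w \<noteq> None \<and> (w, tgt) \<in> (edge_rel E) ^^ (dist0 E tgt v - 1)"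
      using m unfolding edge_rel_def by auto
    define w where "w = nxt E tgt v"
    have w: "E v w \<noteq> None \<and> (w, tgt) \<in> (edge_rel E) ^^ (dist0 E tgt v - 1)"
      unfolding w_def nxt_def using False someI_ex[OF ex] by simp
    have "dist0 E tgt w \<le> dist0 E tgt v - 1" unfolding dist0_def[of E tgt w] by (rule Least_le) (use w in simp)
    moreover have "w \<in> V" using w arena_edge[OF ar] by blast
    ultimately show ?thesis using w m w_def by auto
  qed
  thus "E v (nxt E tgt v) \<noteq> None" "nxt E tgt v \<in> V"
    "v \<noteq> tgt \<Longrightarrow> dist0 E tgt (nxt E tgt v) < dist0 E tgt v" by auto
qed

lemma dist0_zero:
  assumes ar: "arena V E src tgt" and v: "v \<in> V" and "dist0 E tgt v = 0"
  shows "v = tgt"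
proof -
  have "(v, tgt) \<in> (edge_rel E)\<^sup>*" using ar v unfolding arena_def by blast
  then obtain k where "(v, tgt) \<in> (edge_rel E) ^^ k" using rtrancl_power by blast
  hence dk: "(v, tgt) \<in> (edge_rel E) ^^ dist0 E tgt v" unfolding dist0_def by (rule LeastI)
  thus ?thesis using assms by simp
qed

definition fixm :: "'v set \<Rightarrow> ('v \<Rightarrow> 'v \<Rightarrow> (nat \<Rightarrow> nat) option) \<Rightarrow> 'v \<Rightarrow> 'v \<Rightarrow> 'v" where
  "fixm V E v x = (if v \<in> V \<and> E v x = None then (SOME w. E v w \<noteq> None) else x)"

lemma fixm_ok:
  assumes ar: "arena V E src tgt" and v: "v \<in> V"
  shows "E v (fixm V E v x) \<noteq> None"
proof -
  have "\<exists>w. E v w \<noteq> None" using nxt_props[OF ar v] by blast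
  hence "E v (SOME w. E v w \<noteq> None) \<noteq> None" by (rule someI_ex)
  thus ?thesis unfolding fixm_def using v by auto
qed

lemma fixm_id: "(v \<in> V \<Longrightarrow> E v x \<noteq> None) \<Longrightarrow> fixm V E v x = x"
  unfolding fixm_def by auto

lemma strategy_fixm:
  assumes ar: "arena V E src tgt"
  shows "strategy V E i (\<lambda>h. fixm V E (last h i) (f h))"
  unfolding strategy_def using fixm_ok[OF ar] by blast

lemma hist_len: "length (hist n \<sigma> c0 k) = Suc k"
  by (induction k) (auto simp: Let_def)

lemma outcome_0: "outcome n \<sigma> c0 0 = c0"
  by (simp add: outcome_def)

lemma outcome_Suc: "outcome n \<sigma> c0 (Suc k) =
   (\<lambda>j. if j \<in> {1..n} then \<sigma> j (hist n \<sigma> c0 k) else undefined)"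
  by (simp add: outcome_def Let_def)

lemma hist_map: "hist n \<sigma> c0 k = map (outcome n \<sigma> c0) [0..<Suc k]"
proof (induction k)
  case 0 then show ?case by (simp add: outcome_def)
next
  case (Suc k)
  have "hist n \<sigma> c0 (Suc k) = hist n \<sigma> c0 k @ [outcome n \<sigma> c0 (Suc k)]"
    by (simp add: outcome_Suc Let_def)
  then show ?case using Suc by simp
qed

lemma last_hist: "last (hist n \<sigma> c0 k) = outcome n \<sigma> c0 k"
  by (simp add: outcome_def)

lemma inf_path_config: "is_inf_path V E n \<rho> \<Longrightarrow> is_config V n (\<rho> k)"
  unfolding is_inf_path_def trans_def by blast

lemma inf_path_edge: "is_inf_path V E n \<rho> \<Longrightarrow> i \<in> {1..n} \<Longrightarrow> E (\<rho> k i) (\<rho> (Suc k) i) \<noteq> None"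
  unfolding is_inf_path_def trans_def by blast

lemma stay_tgt:
  assumes ar: "arena V E src tgt" and p: "is_inf_path V E n \<rho>" and i: "i \<in> {1..n}"
    and t: "\<rho> k i = tgt"
  shows "\<rho> (k + m) i = tgt"
proof (induction m)
  case 0 then show ?case using t by simp
next
  case (Suc m)
  have "E (\<rho> (k+m) i) (\<rho> (Suc (k+m)) i) \<noteq> None" using inf_path_edge[OF p i] .
  then show ?case using Suc ar unfolding arena_def by auto
qed

lemma pc_zero: "\<rho> 0 i = tgt \<Longrightarrow> path_cost tgt E n i \<rho> = 0"
  unfolding path_cost_def by (auto simp: zero_enat_def)

lemma sum_split_shift: "(\<Sum>k<m+p. f k) = (\<Sum>k<m. f k) + (\<Sum>k<p. f (k+m)) " for f :: "nat \<Rightarrow> nat"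
  by (induction p) (simp_all add: add.commute)

lemma pc_split:
  assumes "\<forall>k<m. \<rho> k i \<noteq> tgt"
  shows "path_cost tgt E n i \<rho> = enat (\<Sum>k<m. step_cost E n (\<rho> k) (\<rho> (Suc k)) i)
           + path_cost tgt E n i (suffix \<rho> m)"
proof (cases "\<exists>k. \<rho> k i = tgt")
  case True
  define L where "L = (LEAST k. \<rho> k i = tgt)"
  have L: "\<rho> L i = tgt" unfolding L_def using True by (rule LeastI_ex)
  have mL: "m \<le> L"
  proof (rule ccontr)
    assume "\<not> m \<le> L" hence "L < m" by simp
    with assms L show False by blast
  qed
  have ex2: "\<exists>k. suffix \<rho> m k i = tgt" unfolding suffix_def
    by (rule exI[of _ "L - m"]) (simp add: L mL)
  have L2: "(LEAST k. suffix \<rho> m k i = tgt) = L - m"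
  proof (rule Least_equality)
    show "suffix \<rho> m (L - m) i = tgt" using L mL by (simp add: suffix_def)
    fix y assume "suffix \<rho> m y i = tgt"
    hence "\<rho> (y + m) i = tgt" by (simp add: suffix_def)
    hence "L \<le> y + m" unfolding L_def by (rule Least_le)
    thus "L - m \<le> y" by simp
  qed
  have "(\<Sum>k<L. step_cost E n (\<rho> k) (\<rho> (Suc k)) i) =
     (\<Sum>k<m. step_cost E n (\<rho> k) (\<rho> (Suc k)) i) + (\<Sum>k<L-m. step_cost E n (\<rho> (k+m)) (\<rho> (Suc (k+m))) i)"
    using sum_split_shift[of "\<lambda>k. step_cost E n (\<rho> k) (\<rho> (Suc k)) i" m "L - m"] mL by simp
  then show ?thesis using True ex2 L2 unfolding path_cost_def L_def[symmetric]
    by (simp add: suffix_def)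
next
  case False
  hence "\<not> (\<exists>k. suffix \<rho> m k i = tgt)" by (simp add: suffix_def)
  then show ?thesis using False unfolding path_cost_def by simp
qed

definition Mb :: "'v set \<Rightarrow> ('v \<Rightarrow> 'v \<Rightarrow> (nat \<Rightarrow> nat) option) \<Rightarrow> nat \<Rightarrow> nat" where
  "Mb V E n = (\<Sum>a\<in>V. \<Sum>b\<in>V. case E a b of None \<Rightarrow> 0 | Some l \<Rightarrow> l n)"

lemma load_le: "load n c c' i \<le> n"
proof -
  have "load n c c' i \<le> card {1..n}" unfolding load_def by (rule card_mono) auto
  thus ?thesis by simp
qed

lemma step_le_Mb:
  assumes ar: "arena V E src tgt" and e: "E (c i) (c' i) \<noteq> None"
  shows "step_cost E n c c' i \<le> Mb V E n"
proof -
  obtain l where l: "E (c i) (c' i) = Some l" using e by auto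
  have V: "c i \<in> V" "c' i \<in> V" using arena_edge[OF ar e] by auto
  have mono: "mono l" using ar l unfolding arena_def by blast
  have finV: "finite V" using ar unfolding arena_def by blast
  have "step_cost E n c c' i = l (load n c c' i)" unfolding step_cost_def using l by simp
  also have "\<dots> \<le> l n" using mono load_le[of n c c' i] by (rule monoD)
  also have "\<dots> = (case E (c i) (c' i) of None \<Rightarrow> 0 | Some l \<Rightarrow> l n)" using l by simp
  also have "\<dots> \<le> (\<Sum>b\<in>V. case E (c i) b of None \<Rightarrow> 0 | Some l \<Rightarrow> l n)"
    using V finV by (intro member_le_sum) auto
  also have "\<dots> \<le> Mb V E n" unfolding Mb_def
    using V finV
    by (intro member_le_sum[where f = "\<lambda>a. \<Sum>b\<in>V. case E a b of None \<Rightarrow> 0 | Some l \<Rightarrow> l n"]) auto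
  finally show ?thesis .
qed

lemma s0_bound:
  assumes ar: "arena V E src tgt" and i: "i \<in> {1..n}" and ci: "c i \<in> V"
  shows "path_cost tgt E n i (outcome n (\<sigma>(i := (\<lambda>h. nxt E tgt (last h i)))) c)
          \<le> enat (dist0 E tgt (c i) * Mb V E n)"
proof -
  define \<pi> where "\<pi> = outcome n (\<sigma>(i := (\<lambda>h. nxt E tgt (last h i)))) c"
  define D where "D = dist0 E tgt (c i)"
  have stp: "\<pi> (Suc k) i = nxt E tgt (\<pi> k i)" for k
    unfolding \<pi>_def outcome_Suc using i by (simp add: last_hist)
  have inv: "\<pi> k i \<in> V \<and> (\<pi> k i \<noteq> tgt \<longrightarrow> dist0 E tgt (\<pi> k i) + k \<le> D)" for k
  proof (induction k)
    case 0 then show ?case using ci by (simp add: \<pi>_def outcome_0 D_def)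
  next
    case (Suc k)
    show ?case
    proof (cases "\<pi> k i = tgt")
      case True
      then show ?thesis using stp[of k] Suc by (simp add: nxt_def)
    next
      case False
      then show ?thesis using stp[of k] Suc nxt_props[OF ar, of "\<pi> k i"] by auto
    qed
  qed
  have reach: "\<pi> D i = tgt"
  proof (rule ccontr)
    assume "\<pi> D i \<noteq> tgt"
    hence "dist0 E tgt (\<pi> D i) = 0" using inv[of D] by simp
    thus False using dist0_zero[OF ar] inv[of D] \<open>\<pi> D i \<noteq> tgt\<close> by blast
  qed
  define L where "L = (LEAST k. \<pi> k i = tgt)"
  have LD: "L \<le> D" unfolding L_def using reach by (rule Least_le)
  have "(\<Sum>k<L. step_cost E n (\<pi> k) (\<pi> (Suc k)) i) \<le> of_nat (card {..<L}) * Mb V E n"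
  proof (rule sum_bounded_above)
    fix k assume "k \<in> {..<L}"
    have "E (\<pi> k i) (\<pi> (Suc k) i) \<noteq> None" using stp[of k] nxt_props[OF ar] inv[of k] by simp
    thus "step_cost E n (\<pi> k) (\<pi> (Suc k)) i \<le> Mb V E n" by (rule step_le_Mb[OF ar])
  qed
  also have "\<dots> \<le> D * Mb V E n" using LD by simp
  finally have "(\<Sum>k<L. step_cost E n (\<pi> k) (\<pi> (Suc k)) i) \<le> D * Mb V E n" .
  thus ?thesis using reach unfolding \<pi>_def[symmetric] D_def[symmetric] path_cost_def L_def[symmetric]
    by auto
qed

lemma nxt_strategy: assumes ar: "arena V E src tgt" shows "strategy V E i (\<lambda>h. nxt E tgt (last h i))"
  unfolding strategy_def
proof (intro allI impI)
  fix h :: "(nat \<Rightarrow> 'a) list" assume "last h i \<in> V"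
  thus "E (last h i) (nxt E tgt (last h i)) \<noteq> None" by (rule nxt_props(1)[OF ar])
qed

lemma nxt_valid: "arena V E src tgt \<Longrightarrow> valid_profile V E n (\<lambda>j h. nxt E tgt (last h j))"
  unfolding valid_profile_def using nxt_strategy[of V E src tgt] by simp

lemma val_attained:
  assumes ar: "arena V E src tgt" and i: "i \<in> {1..n}" and ci: "c i \<in> V"
  shows "\<exists>\<tau>. valid_profile V E n \<tau> \<and> (\<forall>s. strategy V E i s \<longrightarrow>
            val V E tgt n i c \<le> path_cost tgt E n i (outcome n (\<tau>(i := s)) c))"
proof -
  define F where "F \<sigma> = (INF s\<in>{s. strategy V E i s}. path_cost tgt E n i (outcome n (\<sigma>(i := s)) c))" for \<sigma>
  define A where "A = F ` {\<sigma>. valid_profile V E n \<sigma>}"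
  define B where "B = dist0 E tgt (c i) * Mb V E n"
  have bnd: "a \<le> enat B" if aA: "a \<in> A" for a
  proof -
    obtain \<sigma> where a: "a = F \<sigma>" using aA unfolding A_def by auto
    have "F \<sigma> \<le> path_cost tgt E n i (outcome n (\<sigma>(i := (\<lambda>h. nxt E tgt (last h i)))) c)"
      unfolding F_def by (rule INF_lower) (simp add: nxt_strategy[OF ar])
    also have "\<dots> \<le> enat B" unfolding B_def by (rule s0_bound[of V E src tgt i n c, OF ar i ci])
    finally show ?thesis using a by simp
  qed
  have fin: "finite A" using bnd by (rule finite_enat_bounded)
  have ne: "A \<noteq> {}" unfolding A_def using nxt_valid[OF ar, of n] by auto
  have "Sup A = Max A" unfolding Sup_enat_def using fin ne by simp
  hence "Sup A \<in> A" using Max_in[OF fin ne] by simp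
  then obtain \<tau> where \<tau>: "valid_profile V E n \<tau>" "F \<tau> = Sup A" unfolding A_def by auto
  have "val V E tgt n i c = Sup A" unfolding val_def A_def F_def by (simp add: Collect_mem_eq)
  show ?thesis
  proof (intro exI conjI allI impI)
    show "valid_profile V E n \<tau>" by fact
    fix s assume "strategy V E i s"
    hence "F \<tau> \<le> path_cost tgt E n i (outcome n (\<tau>(i := s)) c)"
      unfolding F_def by (intro INF_lower) simp
    thus "val V E tgt n i c \<le> path_cost tgt E n i (outcome n (\<tau>(i := s)) c)"
      using \<tau> \<open>val V E tgt n i c = Sup A\<close> by simp
  qed
qed

lemma hist_shift:
  assumes h0: "hist n \<sigma>1 c0 l' = pre @ [c]"
    and eq: "\<And>k j. j \<in> {1..n} \<Longrightarrow> \<sigma>1 j (pre @ hist n \<sigma>2 c k) = \<sigma>2 j (hist n \<sigma>2 c k)"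
  shows "hist n \<sigma>1 c0 (l' + k) = pre @ hist n \<sigma>2 c k"
proof (induction k)
  case 0 then show ?case using h0 by simp
next
  case (Suc k)
  have "hist n \<sigma>1 c0 (l' + Suc k) = hist n \<sigma>1 c0 (l' + k) @
     [(\<lambda>j. if j \<in> {1..n} then \<sigma>1 j (hist n \<sigma>1 c0 (l' + k)) else undefined)]"
    by (simp add: Let_def)
  also have "\<dots> = pre @ hist n \<sigma>2 c k @
     [(\<lambda>j. if j \<in> {1..n} then \<sigma>2 j (hist n \<sigma>2 c k) else undefined)]"
    using Suc eq by (simp cong: if_cong)
  also have "\<dots> = pre @ hist n \<sigma>2 c (Suc k)" by (simp add: Let_def)
  finally show ?case .
qed

lemma suffix_shift:
  assumes "\<And>k. hist n \<sigma>1 c0 (l' + k) = pre @ hist n \<sigma>2 c k"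
  shows "suffix (outcome n \<sigma>1 c0) l' = outcome n \<sigma>2 c"
proof
  fix k
  have "hist n \<sigma>2 c k \<noteq> []" using hist_len[of n \<sigma>2 c k] by auto
  thus "suffix (outcome n \<sigma>1 c0) l' k = outcome n \<sigma>2 c k"
    unfolding suffix_def outcome_def using assms[of k] by (simp add: add.commute)
qed

lemma pc_dev_split:
  assumes "\<forall>k\<le>l. \<pi> k i \<noteq> tgt"
  shows "path_cost tgt E n i \<pi> = enat (\<Sum>k<l. step_cost E n (\<pi> k) (\<pi> (Suc k)) i)
     + (enat (step_cost E n (\<pi> l) (\<pi> (Suc l)) i) + path_cost tgt E n i (suffix \<pi> (Suc l)))"
proof -
  have "\<forall>k<Suc l. \<pi> k i \<noteq> tgt" using assms by auto
  from pc_split[of "Suc l" \<pi> i tgt E n, OF this] show ?thesis by (simp add: add.assoc)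
qed

lemma enat_cancel: "enat S + a \<le> enat S + b \<Longrightarrow> a \<le> b"
  by (cases a; cases b) auto

lemma config_out: "is_config V n c \<Longrightarrow> j \<notin> {1..n} \<Longrightarrow> c j = undefined"
  unfolding is_config_def by blast

lemma config_in: "is_config V n c \<Longrightarrow> j \<in> {1..n} \<Longrightarrow> c j \<in> V"
  unfolding is_config_def by blast

lemma notgt_before:
  assumes ar: "arena V E src tgt" and p: "is_inf_path V E n \<rho>" and i: "i \<in> {1..n}"
    and t: "\<rho> l i \<noteq> tgt"
  shows "\<forall>k\<le>l. \<rho> k i \<noteq> tgt"
proof (intro allI impI notI)
  fix k assume "k \<le> l" "\<rho> k i = tgt"
  from stay_tgt[OF ar p i this(2), of "l - k"] this(1) t show False by simp
qed

lemma rho_hist: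
  assumes "outcome n \<sigma> c0 = \<rho>"
  shows "hist n \<sigma> c0 k = map \<rho> [0..<Suc k]"
  using hist_map[of n \<sigma> c0 k] assms by simp

lemma sigma_on_rho:
  assumes "outcome n \<sigma> c0 = \<rho>" "j \<in> {1..n}"
  shows "\<sigma> j (map \<rho> [0..<Suc k]) = \<rho> (Suc k) j"
proof -
  have "\<rho> (Suc k) j = outcome n \<sigma> c0 (Suc k) j" using assms by simp
  also have "\<dots> = \<sigma> j (hist n \<sigma> c0 k)" using assms(2) by (simp add: outcome_Suc)
  finally show ?thesis using rho_hist[OF assms(1)] by simp
qed

lemma ne_imp_cond:
  assumes ar: "arena V E src tgt" and p: "is_inf_path V E n \<rho>"
    and NE: "is_NE V E src tgt n \<sigma>" and out: "outcome n \<sigma> (c_src n src) = \<rho>"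
    and i: "i \<in> {1..n}" and cdev: "c \<in> dev V E n i (\<rho> l) (\<rho> (Suc l))"
  shows "path_cost tgt E n i (suffix \<rho> l) \<le> val V E tgt n i c + enat (step_cost E n (\<rho> l) c i)"
proof (cases "\<rho> l i = tgt")
  case True
  hence "path_cost tgt E n i (suffix \<rho> l) = 0" by (intro pc_zero) (simp add: suffix_def)
  thus ?thesis by simp
next
  case False
  have nt: "\<forall>k\<le>l. \<rho> k i \<noteq> tgt" by (rule notgt_before[OF ar p i False])
  have ctr: "trans V E n (\<rho> l) c" and coth: "\<forall>j\<in>{1..n}. j \<noteq> i \<longrightarrow> c j = \<rho> (Suc l) j"
    using cdev unfolding dev_def by auto
  have cconf: "is_config V n c" using ctr unfolding trans_def by blast
  have cedge: "E (\<rho> l i) (c i) \<noteq> None" using ctr i unfolding trans_def by blast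
  have ci: "c i \<in> V" using cconf i by (rule config_in)
  have vp: "valid_profile V E n \<sigma>" using NE unfolding is_NE_def by blast
  define pre where "pre = map \<rho> [0..<Suc l]"
  have pre_ne: "pre \<noteq> []" unfolding pre_def by simp
  have last_pre: "last pre = \<rho> l" unfolding pre_def by simp
  have len_pre: "length pre = Suc l" unfolding pre_def by simp
  define \<tau> where "\<tau> j H = \<sigma> j (pre @ H)" for j H
  have vt: "valid_profile V E n \<tau>"
    unfolding valid_profile_def strategy_def
  proof (intro ballI allI impI)
    fix j H assume j: "j \<in> {1..n}" and H: "H \<noteq> []" and l: "last H j \<in> V"
    have "strategy V E j (\<sigma> j)" using vp j unfolding valid_profile_def by blast
    moreover have "last (pre @ H) = last H" "pre @ H \<noteq> []" using H by auto
    ultimately show "E (last H j) (\<tau> j H) \<noteq> None" unfolding \<tau>_def strategy_def using l by metis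
  qed
  define S where "S = (\<lambda>s. path_cost tgt E n i (outcome n (\<tau>(i := s)) c)) ` {s. strategy V E i s}"
  have Sne: "S \<noteq> {}" unfolding S_def using nxt_strategy[OF ar, of i] by blast
  have "Inf S = (LEAST x. x \<in> S)" using Sne unfolding Inf_enat_def by simp
  hence "Inf S \<in> S" using Sne by (metis LeastI ex_in_conv)
  then obtain s1 where s1: "strategy V E i s1"
    and s1c: "path_cost tgt E n i (outcome n (\<tau>(i := s1)) c) = Inf S" unfolding S_def by auto
  have "Inf S \<le> val V E tgt n i c" unfolding val_def S_def
    using vt by (intro SUP_upper2[of \<tau>]) auto
  define s' where "s' h = fixm V E (last h i)
     (if length h \<le> l then \<rho> (length h) i else if length h = Suc l then c i else s1 (drop (Suc l) h))" for h
  have s'str: "strategy V E i s'" unfolding s'_def by (rule strategy_fixm[OF ar])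
  define \<pi> where "\<pi> = outcome n (\<sigma>(i := s')) (c_src n src)"
  have cl1: "hist n (\<sigma>(i := s')) (c_src n src) k = map \<rho> [0..<Suc k]" if "k \<le> l" for k
    using that
  proof (induction k)
    case 0
    have "\<rho> 0 = c_src n src" using out outcome_0[of n \<sigma> "c_src n src"] by simp
    then show ?case by simp
  next
    case (Suc k)
    have X: "(\<lambda>j. if j \<in> {1..n} then (\<sigma>(i := s')) j (map \<rho> [0..<Suc k]) else undefined) = \<rho> (Suc k)"
    proof
      fix j
      show "(if j \<in> {1..n} then (\<sigma>(i := s')) j (map \<rho> [0..<Suc k]) else undefined) = \<rho> (Suc k) j"
      proof (cases "j \<in> {1..n}")
        case False then show ?thesis using config_out[OF inf_path_config[OF p], of j] by auto
      next
        case True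
        show ?thesis
        proof (cases "j = i")
          case True
          have "E (\<rho> k i) (\<rho> (Suc k) i) \<noteq> None" using inf_path_edge[OF p i] .
          then show ?thesis using True Suc.prems i unfolding s'_def by (simp add: fixm_id)
        next
          case False
          then show ?thesis using \<open>j \<in> {1..n}\<close> sigma_on_rho[OF out] by simp
        qed
      qed
    qed
    have IH: "hist n (\<sigma>(i := s')) (c_src n src) k = map \<rho> [0..<Suc k]"
      by (rule Suc.IH) (use Suc.prems in simp)
    have A: "hist n (\<sigma>(i := s')) (c_src n src) (Suc k) = map \<rho> [0..<Suc k] @ [\<rho> (Suc k)]"
      by (simp only: hist.simps Let_def IH X)
    have eq2: "map \<rho> [0..<Suc (Suc k)] = map \<rho> [0..<Suc k] @ [\<rho> (Suc k)]" by simp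
    show ?case unfolding eq2 by (rule A)
  qed
  have h0: "hist n (\<sigma>(i := s')) (c_src n src) (Suc l) = pre @ [c]"
  proof -
    have X: "(\<lambda>j. if j \<in> {1..n} then (\<sigma>(i := s')) j pre else undefined) = c"
    proof
      fix j
      show "(if j \<in> {1..n} then (\<sigma>(i := s')) j pre else undefined) = c j"
      proof (cases "j \<in> {1..n}")
        case False then show ?thesis using config_out[OF cconf, of j] by auto
      next
        case True
        show ?thesis
        proof (cases "j = i")
          case True
          then show ?thesis using cedge len_pre last_pre i unfolding s'_def by (simp add: fixm_id)
        next
          case False
          then show ?thesis using \<open>j \<in> {1..n}\<close> sigma_on_rho[OF out] coth unfolding pre_def by simp
        qed
      qed
    qed
    have IH: "hist n (\<sigma>(i := s')) (c_src n src) l = pre" using cl1[of l] unfolding pre_def by simp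
    show "hist n (\<sigma>(i := s')) (c_src n src) (Suc l) = pre @ [c]"
      by (simp only: hist.simps Let_def IH X)
  qed
  have shift: "hist n (\<sigma>(i := s')) (c_src n src) (Suc l + k) = pre @ hist n (\<tau>(i := s1)) c k" for k
  proof (rule hist_shift[OF h0])
    fix k j assume j: "j \<in> {1..n}"
    define H where "H = hist n (\<tau>(i := s1)) c k"
    have Hne: "H \<noteq> []" using hist_len[of n "\<tau>(i := s1)" c k] unfolding H_def by auto
    show "(\<sigma>(i := s')) j (pre @ H) = (\<tau>(i := s1)) j H"
    proof (cases "j = i")
      case True
      have "last H i \<in> V \<Longrightarrow> E (last H i) (s1 H) \<noteq> None" using s1 Hne unfolding strategy_def by blast
      then show ?thesis using True Hne len_pre unfolding s'_def by (simp add: fixm_id)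
    next
      case False then show ?thesis unfolding \<tau>_def by simp
    qed
  qed
  have suf: "suffix \<pi> (Suc l) = outcome n (\<tau>(i := s1)) c"
    unfolding \<pi>_def by (rule suffix_shift[OF shift])
  have pik: "\<pi> k = \<rho> k" if "k \<le> l" for k
    using cl1[OF that] unfolding \<pi>_def outcome_def by simp
  have piSl: "\<pi> (Suc l) = c" using h0 unfolding \<pi>_def outcome_def by simp
  have ntpi: "\<forall>k\<le>l. \<pi> k i \<noteq> tgt" using nt pik by simp
  have sums: "(\<Sum>k<l. step_cost E n (\<pi> k) (\<pi> (Suc k)) i) = (\<Sum>k<l. step_cost E n (\<rho> k) (\<rho> (Suc k)) i)"
    using pik by (intro sum.cong) auto
  define T where "T = (\<Sum>k<l. step_cost E n (\<rho> k) (\<rho> (Suc k)) i)"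
  have "\<forall>k<l. \<rho> k i \<noteq> tgt" using nt by auto
  hence pr: "path_cost tgt E n i \<rho> = enat T + path_cost tgt E n i (suffix \<rho> l)"
    unfolding T_def by (rule pc_split)
  have pp: "path_cost tgt E n i \<pi> = enat T + (enat (step_cost E n (\<rho> l) c i) + Inf S)"
    using pc_dev_split[of l \<pi> i tgt E n, OF ntpi] sums pik[of l] piSl suf s1c unfolding T_def by simp
  have "path_cost tgt E n i \<rho> \<le> path_cost tgt E n i \<pi>"
    using NE i s'str out unfolding is_NE_def \<pi>_def by blast
  hence "path_cost tgt E n i (suffix \<rho> l) \<le> enat (step_cost E n (\<rho> l) c i) + Inf S"
    using pr pp enat_cancel by metis
  also have "\<dots> \<le> enat (step_cost E n (\<rho> l) c i) + val V E tgt n i c"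
    using \<open>Inf S \<le> val V E tgt n i c\<close> by (rule add_left_mono)
  finally show ?thesis by (simp add: add.commute)
qed

lemma hist_nth0: "hist n \<sigma> c0 k ! 0 = c0"
  by (induction k) (auto simp: Let_def nth_append hist_len)

definition Pun :: "'v set \<Rightarrow> ('v \<Rightarrow> 'v \<Rightarrow> (nat \<Rightarrow> nat) option) \<Rightarrow> 'v \<Rightarrow> nat \<Rightarrow> nat
     \<Rightarrow> (nat \<Rightarrow> 'v) \<Rightarrow> (nat \<Rightarrow> (nat \<Rightarrow> 'v) list \<Rightarrow> 'v)" where
  "Pun V E tgt n i c = (SOME \<tau>. valid_profile V E n \<tau> \<and> (\<forall>s. strategy V E i s \<longrightarrow>
            val V E tgt n i c \<le> path_cost tgt E n i (outcome n (\<tau>(i := s)) c)))"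

lemma Pun_prop:
  assumes ar: "arena V E src tgt" and i: "i \<in> {1..n}" and ci: "c i \<in> V"
  shows "valid_profile V E n (Pun V E tgt n i c) \<and> (\<forall>s. strategy V E i s \<longrightarrow>
            val V E tgt n i c \<le> path_cost tgt E n i (outcome n ((Pun V E tgt n i c)(i := s)) c))"
  unfolding Pun_def by (rule someI_ex[OF val_attained[of V E src tgt i n c, OF ar i ci]])

definition cand :: "'v set \<Rightarrow> ('v \<Rightarrow> 'v \<Rightarrow> (nat \<Rightarrow> nat) option) \<Rightarrow> 'v \<Rightarrow> nat
     \<Rightarrow> (nat \<Rightarrow> nat \<Rightarrow> 'v) \<Rightarrow> nat \<Rightarrow> (nat \<Rightarrow> 'v) list \<Rightarrow> 'v" where
  "cand V E tgt n \<rho> j h = (if h = map \<rho> [0..<length h] then \<rho> (length h) j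
     else (let d = (LEAST k. k < length h \<and> h ! k \<noteq> \<rho> k); c = h ! d;
               i = (SOME i. i \<in> {1..n} \<and> c i \<noteq> \<rho> d i)
           in Pun V E tgt n i c j (drop d h)))"

definition prof :: "'v set \<Rightarrow> ('v \<Rightarrow> 'v \<Rightarrow> (nat \<Rightarrow> nat) option) \<Rightarrow> 'v \<Rightarrow> nat
     \<Rightarrow> (nat \<Rightarrow> nat \<Rightarrow> 'v) \<Rightarrow> nat \<Rightarrow> (nat \<Rightarrow> 'v) list \<Rightarrow> 'v" where
  "prof V E tgt n \<rho> j h = fixm V E (last h j) (cand V E tgt n \<rho> j h)"

lemma cond_imp_ne:
  assumes ar: "arena V E src tgt" and r0: "\<rho> 0 = c_src n src" and p: "is_inf_path V E n \<rho>"
    and cond: "\<forall>i\<in>{1..n}. \<forall>l. \<forall>c\<in>dev V E n i (\<rho> l) (\<rho> (Suc l)).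
            path_cost tgt E n i (suffix \<rho> l) \<le> val V E tgt n i c + enat (step_cost E n (\<rho> l) c i)"
  shows "is_NE V E src tgt n (prof V E tgt n \<rho>) \<and> outcome n (prof V E tgt n \<rho>) (c_src n src) = \<rho>"
proof -
  define \<sigma> where "\<sigma> = prof V E tgt n \<rho>"
  have vp: "valid_profile V E n \<sigma>" unfolding valid_profile_def \<sigma>_def prof_def
    using strategy_fixm[OF ar] by blast
  have on_rho: "\<sigma> j (map \<rho> [0..<Suc k]) = \<rho> (Suc k) j" if j: "j \<in> {1..n}" for j k
  proof -
    have "cand V E tgt n \<rho> j (map \<rho> [0..<Suc k]) = \<rho> (Suc k) j" unfolding cand_def by simp
    moreover have "E (\<rho> k j) (\<rho> (Suc k) j) \<noteq> None" by (rule inf_path_edge[OF p j])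
    ultimately show ?thesis unfolding \<sigma>_def prof_def by (simp add: fixm_id)
  qed
  have histr: "hist n \<sigma> (c_src n src) k = map \<rho> [0..<Suc k]" for k
  proof (induction k)
    case 0 then show ?case using r0 by simp
  next
    case (Suc k)
    have X: "(\<lambda>j. if j \<in> {1..n} then \<sigma> j (map \<rho> [0..<Suc k]) else undefined) = \<rho> (Suc k)"
    proof
      fix j show "(if j \<in> {1..n} then \<sigma> j (map \<rho> [0..<Suc k]) else undefined) = \<rho> (Suc k) j"
        using on_rho[of j k] config_out[OF inf_path_config[OF p], of j "Suc k"] by auto
    qed
    have A: "hist n \<sigma> (c_src n src) (Suc k) = map \<rho> [0..<Suc k] @ [\<rho> (Suc k)]"
      by (simp only: hist.simps Let_def Suc.IH X)
    have eq2: "map \<rho> [0..<Suc (Suc k)] = map \<rho> [0..<Suc k] @ [\<rho> (Suc k)]" by simp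
    show ?case unfolding eq2 by (rule A)
  qed
  have out: "outcome n \<sigma> (c_src n src) = \<rho>"
    by (rule ext) (simp add: outcome_def histr)
  have NE: "path_cost tgt E n i \<rho> \<le> path_cost tgt E n i (outcome n (\<sigma>(i := s)) (c_src n src))"
    if i: "i \<in> {1..n}" and s: "strategy V E i s" for i s
  proof -
    define \<pi> where "\<pi> = outcome n (\<sigma>(i := s)) (c_src n src)"
    show ?thesis
    proof (cases "\<forall>k. \<pi> k = \<rho> k")
      case True
      hence "\<pi> = \<rho>" by auto
      thus ?thesis unfolding \<pi>_def by simp
    next
      case False
      then obtain m where m: "\<pi> m \<noteq> \<rho> m" by auto
      define m0 where "m0 = (LEAST m. \<pi> m \<noteq> \<rho> m)"
      have m0: "\<pi> m0 \<noteq> \<rho> m0" unfolding m0_def using m by (rule LeastI)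
      have bef: "\<pi> k = \<rho> k" if "k < m0" for k
        using that not_less_Least unfolding m0_def by blast
      have "m0 \<noteq> 0" using m0 r0 unfolding \<pi>_def by (auto simp: outcome_0)
      then obtain l where l: "m0 = Suc l" using not0_implies_Suc by blast
      have pik: "\<pi> k = \<rho> k" if "k \<le> l" for k using bef l that by simp
      define pre where "pre = map \<rho> [0..<Suc l]"
      have pre_ne: "pre \<noteq> []" unfolding pre_def by simp
      have last_pre: "last pre = \<rho> l" unfolding pre_def by simp
      have len_pre: "length pre = Suc l" unfolding pre_def by simp
      have hl: "hist n (\<sigma>(i := s)) (c_src n src) l = pre"
        unfolding pre_def hist_map \<pi>_def[symmetric] using pik by simp
      define c where "c = \<pi> (Suc l)"
      have c_def2: "c = (\<lambda>j. if j \<in> {1..n} then (\<sigma>(i := s)) j pre else undefined)"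
        unfolding c_def \<pi>_def outcome_Suc hl ..
      have h0: "hist n (\<sigma>(i := s)) (c_src n src) (Suc l) = pre @ [c]"
        by (simp only: hist.simps Let_def hl c_def2)
      have cneq: "c \<noteq> \<rho> (Suc l)" using m0 l c_def by simp
      have coth: "c j = \<rho> (Suc l) j" if "j \<noteq> i" for j
      proof (cases "j \<in> {1..n}")
        case True then show ?thesis using that on_rho[of j l] unfolding c_def2 pre_def by simp
      next
        case False then show ?thesis
          using config_out[OF inf_path_config[OF p], of j "Suc l"] unfolding c_def2 by auto
      qed
      have rli: "\<rho> l i \<in> V" using config_in[OF inf_path_config[OF p] i] .
      have cedge: "E (\<rho> l i) (c i) \<noteq> None"
        using s rli pre_ne last_pre i unfolding strategy_def c_def2 by auto
      have ci: "c i \<in> V" using arena_edge[OF ar cedge] by blast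
      have cconf: "is_config V n c" unfolding is_config_def
      proof (intro conjI ballI allI impI)
        fix j assume "j \<in> {1..n}"
        thus "c j \<in> V" using ci coth config_in[OF inf_path_config[OF p], of j "Suc l"] by (cases "j = i") auto
      next
        fix j assume nj: "j \<notin> {1..n}" thus "c j = undefined" unfolding c_def2 by auto
      qed
      have cdev: "c \<in> dev V E n i (\<rho> l) (\<rho> (Suc l))"
        unfolding dev_def trans_def
      proof (intro CollectI conjI ballI impI)
        show "is_config V n (\<rho> l)" by (rule inf_path_config[OF p])
        show "is_config V n c" by fact
        fix j assume j: "j \<in> {1..n}"
        show "E (\<rho> l j) (c j) \<noteq> None"
          using cedge coth inf_path_edge[OF p j, of l] by (cases "j = i") auto
        assume "j \<noteq> i" thus "c j = \<rho> (Suc l) j" by (rule coth)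
      qed
      have cineq: "c i \<noteq> \<rho> (Suc l) i"
      proof
        assume "c i = \<rho> (Suc l) i"
        hence "c = \<rho> (Suc l)" using coth by (intro ext) (metis)
        thus False using cneq by simp
      qed
      have nti: "\<rho> l i \<noteq> tgt"
      proof
        assume t: "\<rho> l i = tgt"
        have "E tgt b \<noteq> None \<longleftrightarrow> b = tgt" for b using ar unfolding arena_def by blast
        hence "c i = tgt" "\<rho> (Suc l) i = tgt" using cedge inf_path_edge[OF p i, of l] t by auto
        thus False using cineq by simp
      qed
      have nt: "\<forall>k\<le>l. \<rho> k i \<noteq> tgt" by (rule notgt_before[OF ar p i nti])
      define \<tau> where "\<tau> = Pun V E tgt n i c"
      have Pp: "valid_profile V E n \<tau> \<and> (\<forall>s. strategy V E i s \<longrightarrow>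
            val V E tgt n i c \<le> path_cost tgt E n i (outcome n (\<tau>(i := s)) c))"
        unfolding \<tau>_def by (rule Pun_prop[of V E src tgt i n c, OF ar i ci])
      define s' where "s' H = s (pre @ H)" for H
      have s'str: "strategy V E i s'" unfolding strategy_def
      proof (intro allI impI)
        fix H :: "(nat \<Rightarrow> 'a) list" assume H: "H \<noteq> []" "last H i \<in> V"
        have "last (pre @ H) = last H" "pre @ H \<noteq> []" using H by auto
        thus "E (last H i) (s' H) \<noteq> None" using s H unfolding strategy_def s'_def by metis
      qed
      have idx: "(SOME i'. i' \<in> {1..n} \<and> c i' \<noteq> \<rho> (Suc l) i') = i"
      proof (rule some_equality)
        show "i \<in> {1..n} \<and> c i \<noteq> \<rho> (Suc l) i" using i cineq by simp
        fix i' assume "i' \<in> {1..n} \<and> c i' \<noteq> \<rho> (Suc l) i'"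
        thus "i' = i" using coth by blast
      qed
      have shift: "hist n (\<sigma>(i := s)) (c_src n src) (Suc l + k) = pre @ hist n (\<tau>(i := s')) c k" for k
      proof (rule hist_shift[OF h0])
        fix k j assume j: "j \<in> {1..n}"
        define H where "H = hist n (\<tau>(i := s')) c k"
        have Hne: "H \<noteq> []" using hist_len[of n "\<tau>(i := s')" c k] unfolding H_def by auto
        have H0: "H ! 0 = c" unfolding H_def by (rule hist_nth0)
        show "(\<sigma>(i := s)) j (pre @ H) = (\<tau>(i := s')) j H"
        proof (cases "j = i")
          case True then show ?thesis unfolding s'_def by simp
        next
          case False
          let ?h = "pre @ H"
          have nth_sl: "?h ! Suc l = c" using len_pre H0 by (simp add: nth_append)
          have lenh: "Suc l < length ?h" using len_pre Hne by simp
          have notr: "?h \<noteq> map \<rho> [0..<length ?h]"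
          proof
            assume "?h = map \<rho> [0..<length ?h]"
            hence "?h ! Suc l = \<rho> (Suc l)" using lenh by (metis add_0 diff_zero nth_map_upt)
            thus False using nth_sl cneq by simp
          qed
          have d: "(LEAST k. k < length ?h \<and> ?h ! k \<noteq> \<rho> k) = Suc l"
          proof (rule Least_equality)
            show "Suc l < length ?h \<and> ?h ! Suc l \<noteq> \<rho> (Suc l)" using lenh nth_sl cneq by simp
            fix y assume y: "y < length ?h \<and> ?h ! y \<noteq> \<rho> y"
            show "Suc l \<le> y"
            proof (rule ccontr)
              assume "\<not> Suc l \<le> y" hence "y < length pre" using len_pre by simp
              hence "?h ! y = pre ! y" by (simp add: nth_append)
              also have "\<dots> = \<rho> y" using \<open>y < length pre\<close> unfolding pre_def
                by (metis add_0 diff_zero length_map length_upt nth_map_upt)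
              finally have "?h ! y = \<rho> y" .
              thus False using y by simp
            qed
          qed
          have dr: "drop (Suc l) ?h = H" using len_pre by simp
          have "cand V E tgt n \<rho> j ?h = \<tau> j H"
            unfolding cand_def using notr d nth_sl idx dr by (simp add: \<tau>_def Let_def)
          moreover have "last H j \<in> V \<Longrightarrow> E (last H j) (\<tau> j H) \<noteq> None"
            using Pp j Hne unfolding valid_profile_def strategy_def by blast
          ultimately have "\<sigma> j ?h = \<tau> j H"
            unfolding \<sigma>_def prof_def using Hne by (simp add: fixm_id)
          thus ?thesis using False by simp
        qed
      qed
      have suf: "suffix \<pi> (Suc l) = outcome n (\<tau>(i := s')) c"
        unfolding \<pi>_def by (rule suffix_shift[OF shift])
      have ntpi: "\<forall>k\<le>l. \<pi> k i \<noteq> tgt" using nt pik by simp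
      have sums: "(\<Sum>k<l. step_cost E n (\<pi> k) (\<pi> (Suc k)) i) = (\<Sum>k<l. step_cost E n (\<rho> k) (\<rho> (Suc k)) i)"
        using pik by (intro sum.cong) auto
      define T where "T = (\<Sum>k<l. step_cost E n (\<rho> k) (\<rho> (Suc k)) i)"
      have "\<forall>k<l. \<rho> k i \<noteq> tgt" using nt by auto
      hence pr: "path_cost tgt E n i \<rho> = enat T + path_cost tgt E n i (suffix \<rho> l)"
        unfolding T_def by (rule pc_split)
      have pp: "path_cost tgt E n i \<pi> = enat T + (enat (step_cost E n (\<rho> l) c i)
            + path_cost tgt E n i (outcome n (\<tau>(i := s')) c))"
        using pc_dev_split[of l \<pi> i tgt E n, OF ntpi] sums pik[of l] suf c_def unfolding T_def by simp
      have "path_cost tgt E n i (suffix \<rho> l) \<le> val V E tgt n i c + enat (step_cost E n (\<rho> l) c i)"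
        using cond i cdev by blast
      also have "\<dots> \<le> path_cost tgt E n i (outcome n (\<tau>(i := s')) c) + enat (step_cost E n (\<rho> l) c i)"
        using Pp s'str by (intro add_right_mono) blast
      finally have "path_cost tgt E n i \<rho> \<le> path_cost tgt E n i \<pi>"
        unfolding pr pp by (simp add: add_left_mono add.commute)
      thus ?thesis unfolding \<pi>_def .
    qed
  qed
  show ?thesis unfolding is_NE_def using vp NE out \<sigma>_def by auto
qed

theorem mainTheorem5:
  fixes V :: "'v set" and E :: "'v \<Rightarrow> 'v \<Rightarrow> (nat \<Rightarrow> nat) option"
    and src tgt :: 'v and n :: nat and \<rho> :: "nat \<Rightarrow> nat \<Rightarrow> 'v"
  assumes "arena V E src tgt"
    and "\<rho> 0 = c_src n src"
    and "is_inf_path V E n \<rho>"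
  shows "(\<exists>\<sigma>. is_NE V E src tgt n \<sigma> \<and> outcome n \<sigma> (c_src n src) = \<rho>) \<longleftrightarrow>
         (\<forall>i\<in>{1..n}. \<forall>l. \<forall>c\<in>dev V E n i (\<rho> l) (\<rho> (Suc l)).
            path_cost tgt E n i (suffix \<rho> l) \<le> val V E tgt n i c + enat (step_cost E n (\<rho> l) c i))"
proof
  assume "\<exists>\<sigma>. is_NE V E src tgt n \<sigma> \<and> outcome n \<sigma> (c_src n src) = \<rho>"
  then obtain \<sigma> where "is_NE V E src tgt n \<sigma>" "outcome n \<sigma> (c_src n src) = \<rho>" by blast
  thus "\<forall>i\<in>{1..n}. \<forall>l. \<forall>c\<in>dev V E n i (\<rho> l) (\<rho> (Suc l)).
            path_cost tgt E n i (suffix \<rho> l) \<le> val V E tgt n i c + enat (step_cost E n (\<rho> l) c i)"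
    using ne_imp_cond[OF assms(1) assms(3)] by blast
next
  assume "\<forall>i\<in>{1..n}. \<forall>l. \<forall>c\<in>dev V E n i (\<rho> l) (\<rho> (Suc l)).
            path_cost tgt E n i (suffix \<rho> l) \<le> val V E tgt n i c + enat (step_cost E n (\<rho> l) c i)"
  from cond_imp_ne[OF assms this]
  show "\<exists>\<sigma>. is_NE V E src tgt n \<sigma> \<and> outcome n \<sigma> (c_src n src) = \<rho>" by blast
qed

end
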